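(* Let $\gamma\in(0,1)$, $\lambda=0$, and assume $\widehat\Sigma$ is positive definite and $I-\gamma\widehat M^\pi$ is invertible. Define the (discounted) FQI-OPE estimator $\widehat v^\pi:=(\nu_0^\pi)^\top(I-\gamma\widehat M^\pi)^{-1}\widehat R$. For $f,g\in\mathcal Q$ define $$J(f,g):=\frac1N\sum_{n=1}^N\Big(\Big(f(s_n,a_n)-\gamma\int_{\mathcal A}f(s_n',a')\pi(a'\mid s_n')\,da'\Big)g(s_n,a_n)-\tfrac12 g(s_n,a_n)^2\Big)-\mathbb E\big[f(s_0,a_0)\mid s_0\sim\xi_0,a_0\sim\pi(\cdot\mid s_0)\big],$$ let $(f^*,g^* )$ be the solution of $\min_{f\in\mathcal Q}\max_{g\in\mathcal Q}J(f,g)$, and set $\widehat v^\pi_{\mathsf{DualDICE}}:=\frac1N\sum_{n=1}^N g^*(s_n,a_n)r_n'$. Then $\widehat v^\pi_{\mathsf{DualDICE}}=\widehat v^\pi$.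
   Context: $\mathcal X=\mathcal S\times\mathcal A$; $\pi$ is a target policy, $\xi_0$ an initial state distribution. $\phi:\mathcal X\to\mathbb R^d$ is a feature map, $\mathcal Q=\{\phi(\cdot)^\top w:w\in\mathbb R^d\}$, $\phi^\pi(s):=\int_{\mathcal A}\phi(s,a)\pi(a\mid s)\,da$. Data $\{(s_n,a_n,s_n',r_n')\}_{n=1}^N$. $\widehat\Sigma:=\lambda I+\sum_{n}\phi(s_n,a_n)\phi(s_n,a_n)^\top$, $\widehat R:=\widehat\Sigma^{-1}\sum_n r_n'\phi(s_n,a_n)$, $\widehat M^\pi:=\widehat\Sigma^{-1}\sum_n\phi(s_n,a_n)\phi^\pi(s_n')^\top$, $\nu_0^\pi:=\mathbb E[\phi(s,a)\mid s\sim\xi_0,a\sim\pi(\cdot\mid s)]$. *)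

theory Defs
  imports "HOL-Probability.Probability"
begin

definition outer :: "real^'n \<Rightarrow> real^'m \<Rightarrow> real^'m^'n" where
  "outer x y = (\<chi> i j. x$i * y$j)"

definition pos_def_mat :: "real^'n^'n \<Rightarrow> bool" where
  "pos_def_mat A \<longleftrightarrow> transpose A = A \<and> (\<forall>x. x \<noteq> 0 \<longrightarrow> x \<bullet> (A *v x) > 0)"

definition Qcls :: "('x \<Rightarrow> real^'d) \<Rightarrow> ('x \<Rightarrow> real) set" where
  "Qcls phi = {(\<lambda>x. phi x \<bullet> w) | w. True}"

definition phi_pi :: "('s \<Rightarrow> 'a measure) \<Rightarrow> ('s \<times> 'a \<Rightarrow> real^'d) \<Rightarrow> 's \<Rightarrow> real^'d" where
  "phi_pi pol phi s = integral\<^sup>L (pol s) (\<lambda>a. phi (s, a))"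

definition policy_kernel :: "('s \<Rightarrow> 'a measure) \<Rightarrow> bool" where
  "policy_kernel pol \<longleftrightarrow> (\<forall>s. prob_space (pol s))"

definition nu0 :: "'s measure \<Rightarrow> ('s \<Rightarrow> 'a measure) \<Rightarrow> ('s \<times> 'a \<Rightarrow> real^'d) \<Rightarrow> real^'d" where
  "nu0 xi0 pol phi = integral\<^sup>L xi0 (\<lambda>s. integral\<^sup>L (pol s) (\<lambda>a. phi (s, a)))"

definition Sigma_hat :: "real \<Rightarrow> ('s \<times> 'a \<Rightarrow> real^'d) \<Rightarrow> nat \<Rightarrow> (nat \<Rightarrow> 's) \<Rightarrow> (nat \<Rightarrow> 'a) \<Rightarrow> real^'d^'d" where
  "Sigma_hat lam phi N S A = lam *\<^sub>R mat 1 + (\<Sum>n\<in>{1..N}. outer (phi (S n, A n)) (phi (S n, A n)))"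

definition R_hat :: "real \<Rightarrow> ('s \<times> 'a \<Rightarrow> real^'d) \<Rightarrow> nat \<Rightarrow> (nat \<Rightarrow> 's) \<Rightarrow> (nat \<Rightarrow> 'a) \<Rightarrow> (nat \<Rightarrow> real) \<Rightarrow> real^'d" where
  "R_hat lam phi N S A r = matrix_inv (Sigma_hat lam phi N S A) *v (\<Sum>n\<in>{1..N}. r n *\<^sub>R phi (S n, A n))"

definition M_hat :: "real \<Rightarrow> ('s \<Rightarrow> 'a measure) \<Rightarrow> ('s \<times> 'a \<Rightarrow> real^'d) \<Rightarrow> nat \<Rightarrow> (nat \<Rightarrow> 's) \<Rightarrow> (nat \<Rightarrow> 'a) \<Rightarrow> (nat \<Rightarrow> 's) \<Rightarrow> real^'d^'d" where
  "M_hat lam pol phi N S A S' = matrix_inv (Sigma_hat lam phi N S A) **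
     (\<Sum>n\<in>{1..N}. outer (phi (S n, A n)) (phi_pi pol phi (S' n)))"

definition v_hat :: "real \<Rightarrow> real \<Rightarrow> 's measure \<Rightarrow> ('s \<Rightarrow> 'a measure) \<Rightarrow> ('s \<times> 'a \<Rightarrow> real^'d)
     \<Rightarrow> nat \<Rightarrow> (nat \<Rightarrow> 's) \<Rightarrow> (nat \<Rightarrow> 'a) \<Rightarrow> (nat \<Rightarrow> 's) \<Rightarrow> (nat \<Rightarrow> real) \<Rightarrow> real" where
  "v_hat lam gamma xi0 pol phi N S A S' r =
     nu0 xi0 pol phi \<bullet> (matrix_inv (mat 1 - gamma *\<^sub>R M_hat lam pol phi N S A S') *v R_hat lam phi N S A r)"

definition J_dd :: "real \<Rightarrow> 's measure \<Rightarrow> ('s \<Rightarrow> 'a measure) \<Rightarrow> nat \<Rightarrow> (nat \<Rightarrow> 's) \<Rightarrow> (nat \<Rightarrow> 'a) \<Rightarrow> (nat \<Rightarrow> 's)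
     \<Rightarrow> ('s \<times> 'a \<Rightarrow> real) \<Rightarrow> ('s \<times> 'a \<Rightarrow> real) \<Rightarrow> real" where
  "J_dd gamma xi0 pol N S A S' f g =
     (1 / real N) * (\<Sum>n\<in>{1..N}.
        (f (S n, A n) - gamma * integral\<^sup>L (pol (S' n)) (\<lambda>a'. f (S' n, a'))) * g (S n, A n)
        - 1/2 * (g (S n, A n))\<^sup>2)
     - integral\<^sup>L xi0 (\<lambda>s. integral\<^sup>L (pol s) (\<lambda>a. f (s, a)))"

end

theory Submission
  imports Defs
begin
lemma outer_mv: "outer a b *v w = (b \<bullet> w) *\<^sub>R a"
  by (simp add: outer_def matrix_vector_mult_def inner_vec_def vec_eq_iff sum_distrib_left mult.assoc mult.commute mult.left_commute)
lemma sum_mv: "finite I \<Longrightarrow> (sum f I) *v (w::'a::semiring_1^'n) = (\<Sum>i\<in>I. f i *v w)"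
  by (induction I rule: finite_induct) (auto simp: matrix_vector_mult_add_rdistrib)
lemma minv: fixes A :: "real^'n^'n" assumes "invertible A"
  shows "A ** matrix_inv A = mat 1" "matrix_inv A ** A = mat 1"
  using someI_ex[OF assms[unfolded invertible_def]] unfolding matrix_inv_def by auto
lemma inner_tr: "(x::real^'n) \<bullet> (A *v y) = (transpose A *v x) \<bullet> y"
  by (simp add: dot_lmul_matrix)
lemma lin0: fixes a b :: real assumes "\<forall>t. 0 \<le> a*t + b*t^2" shows "a = 0"
proof (rule ccontr)
  assume "a \<noteq> 0"
  define c where "c = \<bar>b\<bar> + 1"
  have c: "c > 0" "\<bar>b\<bar> \<le> c - 1" by (auto simp: c_def)
  have "0 \<le> a*(-a/c) + b*(-a/c)^2" using assms by blast
  also have "\<dots> \<le> a*(-a/c) + \<bar>b\<bar>*(-a/c)^2" by (simp add: mult_right_mono)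
  also have "\<dots> = (a^2/c^2)*(\<bar>b\<bar> - c)" using c by (simp add: field_simps power2_eq_square)
  also have "\<dots> < 0" using c \<open>a\<noteq>0\<close> by (intro mult_pos_neg) auto
  finally show False by simp
qed
lemma ex_nz: "\<exists>x::real^'d. x \<noteq> 0"
  by (rule exI[of _ "\<chi> i. 1"]) (simp add: vec_eq_iff)

theorem theorem6:
  fixes phi :: "'s \<times> 'a \<Rightarrow> real^'d"
    and pol :: "'s \<Rightarrow> 'a measure" and xi0 :: "'s measure"
    and N :: nat and S :: "nat \<Rightarrow> 's" and A :: "nat \<Rightarrow> 'a" and S' :: "nat \<Rightarrow> 's"
    and r :: "nat \<Rightarrow> real" and gamma :: real
    and fstar gstar :: "'s \<times> 'a \<Rightarrow> real"
  assumes "0 < gamma" and "gamma < 1"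
    and "prob_space xi0" and "policy_kernel pol"
    and "\<forall>s. integrable (pol s) (\<lambda>a. phi (s, a))"
    and "integrable xi0 (phi_pi pol phi)"
    and "pos_def_mat (Sigma_hat 0 phi N S A)"
    and "invertible (mat 1 - gamma *\<^sub>R M_hat 0 pol phi N S A S')"
    and "fstar \<in> Qcls phi" and "gstar \<in> Qcls phi"
    and "\<forall>g\<in>Qcls phi. J_dd gamma xi0 pol N S A S' fstar g \<le> J_dd gamma xi0 pol N S A S' fstar gstar"
    and "\<forall>f\<in>Qcls phi. (SUP g\<in>Qcls phi. J_dd gamma xi0 pol N S A S' fstar g)
                      \<le> (SUP g\<in>Qcls phi. J_dd gamma xi0 pol N S A S' f g)"
  shows "(1 / real N) * (\<Sum>n\<in>{1..N}. gstar (S n, A n) * r n) = v_hat 0 gamma xi0 pol phi N S A S' r"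
proof -
  define Sg where "Sg = Sigma_hat 0 phi N S A"
  define Bm where "Bm = (\<Sum>n\<in>{1..N}. outer (phi (S n, A n)) (phi_pi pol phi (S' n)))"
  define u where "u = (\<Sum>n\<in>{1..N}. r n *\<^sub>R phi (S n, A n))"
  define P where "P = mat 1 - gamma *\<^sub>R M_hat 0 pol phi N S A S'"
  define nu where "nu = nu0 xi0 pol phi"
  define J where "J = J_dd gamma xi0 pol N S A S'"
  have sym: "transpose Sg = Sg" and pd: "\<And>x. x \<noteq> 0 \<Longrightarrow> x \<bullet> (Sg *v x) > 0"
    using assms(7) unfolding pos_def_mat_def Sg_def by auto
  have psd: "x \<bullet> (Sg *v x) \<ge> 0" for x
    using pd[of x] by (cases "x = 0") auto
  have Sg_mv: "Sg *v w = (\<Sum>n\<in>{1..N}. (phi (S n, A n) \<bullet> w) *\<^sub>R phi (S n, A n))" for w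
    unfolding Sg_def Sigma_hat_def by (simp add: matrix_vector_mult_add_rdistrib sum_mv outer_mv)
  have Bm_mv: "Bm *v w = (\<Sum>n\<in>{1..N}. (phi_pi pol phi (S' n) \<bullet> w) *\<^sub>R phi (S n, A n))" for w
    unfolding Bm_def by (simp add: sum_mv outer_mv)
  have Npos: "N > 0"
  proof (rule ccontr)
    assume "\<not> N > 0"
    then have "Sg = 0" unfolding Sg_def Sigma_hat_def by simp
    obtain x :: "real^'d" where "x \<noteq> 0" using ex_nz by blast
    with pd[of x] \<open>Sg = 0\<close> show False by simp
  qed
  have invSg: "invertible Sg"
  proof -
    have "\<forall>x. Sg *v x = 0 \<longrightarrow> x = 0" using pd by force
    then show ?thesis unfolding invertible_left_inverse using matrix_left_invertible_ker by blast
  qed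
  have invP: "invertible P" using assms(8) unfolding P_def .
  have symv: "a \<bullet> (Sg *v b) = b \<bullet> (Sg *v a)" for a b
    by (metis inner_tr sym inner_commute)
  have SgP: "Sg *v (P *v w) = Sg *v w - gamma *\<^sub>R (Bm *v w)" for w
  proof -
    have "P *v w = w - gamma *\<^sub>R (matrix_inv Sg *v (Bm *v w))"
      unfolding P_def M_hat_def Sg_def[symmetric] Bm_def[symmetric]
      by (simp add: matrix_vector_mult_diff_rdistrib scaleR_matrix_vector_assoc[symmetric] matrix_vector_mul_assoc)
    then have "Sg *v (P *v w) = Sg *v w - gamma *\<^sub>R ((Sg ** matrix_inv Sg) *v (Bm *v w))"
      by (simp add: matrix_vector_mult_diff_distrib matrix_vector_mult_scaleR matrix_vector_mul_assoc matrix_mul_assoc)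
    then show ?thesis using minv(1)[OF invSg] by simp
  qed
  have int1: "integral\<^sup>L (pol s) (\<lambda>a. phi (s, a) \<bullet> w) = phi_pi pol phi s \<bullet> w" for s w
    using assms(5) unfolding phi_pi_def by simp
  have int2: "integral\<^sup>L xi0 (\<lambda>s. phi_pi pol phi s \<bullet> w) = nu \<bullet> w" for w
    using assms(6) unfolding nu_def nu0_def phi_pi_def[symmetric] by simp
  define q where "q w v = v \<bullet> (Sg *v (P *v w)) - 1/2 * (v \<bullet> (Sg *v v))" for w v
  have Jform: "J (\<lambda>x. phi x \<bullet> w) (\<lambda>x. phi x \<bullet> v) = (1 / real N) * q w v - nu \<bullet> w" for w v
  proof -
    have e1: "v \<bullet> (Sg *v (P *v w)) = (\<Sum>n\<in>{1..N}. (phi (S n, A n) \<bullet> w - gamma * (phi_pi pol phi (S' n) \<bullet> w)) * (phi (S n, A n) \<bullet> v))"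
      unfolding SgP unfolding Sg_mv Bm_mv
      by (simp add: inner_diff_right inner_sum_right sum_subtractf sum_distrib_left algebra_simps inner_commute)
    have e2: "v \<bullet> (Sg *v v) = (\<Sum>n\<in>{1..N}. (phi (S n, A n) \<bullet> v)^2)"
      unfolding Sg_mv by (simp add: inner_sum_right power2_eq_square inner_commute)
    show ?thesis
      unfolding J_def J_dd_def q_def e1 e2 int1 int2
      by (simp add: sum_subtractf sum_distrib_left right_diff_distrib)
  qed
  have qsq: "q w v = 1/2 * ((P *v w) \<bullet> (Sg *v (P *v w))) - 1/2 * ((v - P *v w) \<bullet> (Sg *v (v - P *v w)))" for w v
    unfolding q_def using symv[of v "P *v w"]
    by (simp add: matrix_vector_mult_diff_distrib inner_diff_left inner_diff_right algebra_simps)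
  have qmax: "q w v \<le> q w (P *v w)" for w v
    using qsq[of w v] qsq[of w "P *v w"] psd[of "v - P *v w"] by simp
  obtain ws where ws: "fstar = (\<lambda>x. phi x \<bullet> ws)" using assms(9) unfolding Qcls_def by auto
  obtain vs where vs: "gstar = (\<lambda>x. phi x \<bullet> vs)" using assms(10) unfolding Qcls_def by auto
  define y where "y = P *v ws"
  have inQ: "(\<lambda>x. phi x \<bullet> v) \<in> Qcls phi" for v unfolding Qcls_def by auto
  have vsy: "vs = y"
  proof -
    have "J fstar (\<lambda>x. phi x \<bullet> y) \<le> J fstar gstar" using assms(11) inQ unfolding J_def by blast
    then have "(1/real N) * q ws y \<le> (1/real N) * q ws vs" unfolding ws vs Jform by simp
    then have "q ws y \<le> q ws vs" using Npos by (simp add: divide_le_cancel)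
    then have "(vs - y) \<bullet> (Sg *v (vs - y)) \<le> 0" using qsq[of ws vs] qsq[of ws y] unfolding y_def by simp
    then have "vs - y = 0" using pd[of "vs - y"] by (cases "vs - y = 0") auto
    then show ?thesis by simp
  qed
  define h where "h w = (1/real N) * q w (P *v w) - nu \<bullet> w" for w
  have SUPeq: "(SUP g\<in>Qcls phi. J (\<lambda>x. phi x \<bullet> w) g) = h w" for w
  proof (rule cSup_eq_maximum)
    show "h w \<in> J (\<lambda>x. phi x \<bullet> w) ` Qcls phi"
      using inQ[of "P *v w"] Jform[of w "P *v w"] unfolding h_def by force
    show "\<And>z. z \<in> J (\<lambda>x. phi x \<bullet> w) ` Qcls phi \<Longrightarrow> z \<le> h w"
    proof -
      fix z assume "z \<in> J (\<lambda>x. phi x \<bullet> w) ` Qcls phi"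
      then obtain v where "z = J (\<lambda>x. phi x \<bullet> w) (\<lambda>x. phi x \<bullet> v)" unfolding Qcls_def by auto
      then show "z \<le> h w" unfolding Jform h_def using qmax[of w v] Npos
        by (simp add: divide_right_mono)
    qed
  qed
  have hmin: "h ws \<le> h w" for w
  proof -
    have "(SUP g\<in>Qcls phi. J fstar g) \<le> (SUP g\<in>Qcls phi. J (\<lambda>x. phi x \<bullet> w) g)"
      using assms(12) inQ[of w] unfolding J_def by blast
    then show ?thesis unfolding ws SUPeq .
  qed
  have foc: "(P *v e) \<bullet> (Sg *v y) = real N * (nu \<bullet> e)" for e
  proof -
    define z where "z = P *v e"
    define a where "a = (z \<bullet> (Sg *v y)) / real N - nu \<bullet> e"
    define b where "b = (z \<bullet> (Sg *v z)) / (2 * real N)"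
    have "0 \<le> a*t + b*t^2" for t
    proof -
      have Pw: "P *v (ws + t *\<^sub>R e) = y + t *\<^sub>R z"
        unfolding y_def z_def by (simp add: matrix_vector_right_distrib matrix_vector_mult_scaleR)
      have qe: "q w (P *v w) = 1/2 * ((P *v w) \<bullet> (Sg *v (P *v w)))" for w
        using qsq[of w "P *v w"] by simp
      have "h (ws + t *\<^sub>R e) - h ws = a*t + b*t^2"
        unfolding h_def qe unfolding Pw unfolding y_def[symmetric] a_def b_def
        using symv[of y z] Npos
        by (simp add: matrix_vector_right_distrib matrix_vector_mult_scaleR inner_add_left inner_add_right
              inner_diff_left field_simps power2_eq_square)
      then show ?thesis using hmin[of "ws + t *\<^sub>R e"] by simp
    qed
    then have "a = 0" using lin0 by blast
    then show ?thesis unfolding a_def z_def using Npos by (simp add: field_simps)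
  qed
  define e where "e = matrix_inv P *v (matrix_inv Sg *v u)"
  have Pe: "P *v e = matrix_inv Sg *v u"
    unfolding e_def matrix_vector_mul_assoc[of P] minv(1)[OF invP] by simp
  have "(P *v e) \<bullet> (Sg *v y) = u \<bullet> y"
    unfolding Pe inner_tr sym by (simp add: matrix_vector_mul_assoc minv(1)[OF invSg] inner_commute)
  moreover have "v_hat 0 gamma xi0 pol phi N S A S' r = nu \<bullet> e"
    unfolding v_hat_def e_def nu_def P_def R_hat_def Sg_def u_def ..
  moreover have "(\<Sum>n\<in>{1..N}. gstar (S n, A n) * r n) = u \<bullet> y"
    unfolding vs vsy u_def by (simp add: inner_sum_right inner_commute mult.commute)
  ultimately show ?thesis using foc[of e] Npos by (simp add: field_simps)
qed
end
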